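(* Let $\mathcal{G}_n$ be the set of binary words $w=w_1\cdots w_{2n}$ with $n$ zeros and $n$ ones. For $w\in\mathcal{G}_n$ define $\mathrm{sz}(w)=|\{i\in[n]: w_i=w_{2n+1-i}=0\}|$, $o_{00}(w)=|\{i\in[n]: w_{2i-1}w_{2i}=00\}|$, and $\#_{001}(w)$ the number of indices $j$ with $w_jw_{j+1}w_{j+2}=001$. Then for all $n,k$, $$|\{w\in\mathcal{G}_n:\mathrm{sz}(w)=k\}|=|\{w\in\mathcal{G}_n:o_{00}(w)=k\}|=|\{w\in\mathcal{G}_n:\#_{001}(w)=k\}|.$$
   Context: $[n]=\{1,2,\dots,n\}$. Occurrences of $001$ are as consecutive subwords. *)

theory Defs
  imports Main
begin

text \<open>Binary words are lists over {0,1} (as naturals); position i (1-based) is w ! (i - 1).\<close>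

definition G :: "nat \<Rightarrow> nat list set" where
  "G n = {w. length w = 2 * n \<and> set w \<subseteq> {0, 1} \<and> length (filter (\<lambda>x. x = 0) w) = n}"

definition sz :: "nat list \<Rightarrow> nat" where
  "sz w = (let n = length w div 2 in
     card {i \<in> {1..n}. w ! (i - 1) = 0 \<and> w ! (2 * n + 1 - i - 1) = 0})"

definition o00 :: "nat list \<Rightarrow> nat" where
  "o00 w = (let n = length w div 2 in
     card {i \<in> {1..n}. w ! (2 * i - 1 - 1) = 0 \<and> w ! (2 * i - 1) = 0})"

definition occ001 :: "nat list \<Rightarrow> nat" where
  "occ001 w = card {j \<in> {1..length w}. j + 2 \<le> length w \<and>
      w ! (j - 1) = 0 \<and> w ! j = 0 \<and> w ! (j + 1) = 1}"

end

theory Submission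
  imports Defs "HOL-Combinatorics.Permutations"
begin


lemma occ001_Nil: "occ001 [] = 0"
  by (simp add: occ001_def)

lemma occ001_Cons:
  "occ001 (x#w) = (if x = 0 \<and> length w \<ge> 2 \<and> w!0 = 0 \<and> w!1 = 1 then 1 else 0) + occ001 w"
proof -
  let ?P = "\<lambda>w j. j + 2 \<le> length w \<and> w ! (j - 1) = 0 \<and> w ! j = 0 \<and> w ! (j + 1) = (1::nat)"
  have eq: "{j \<in> {1..length (x#w)}. ?P (x#w) j} =
     (if x = 0 \<and> length w \<ge> 2 \<and> w!0 = 0 \<and> w!1 = 1 then {1} else {}) \<union> Suc ` {j \<in> {1..length w}. ?P w j}"
  proof (rule set_eqI)
    fix j
    show "j \<in> {j \<in> {1..length (x#w)}. ?P (x#w) j} \<longleftrightarrow> j \<in> (if x = 0 \<and> length w \<ge> 2 \<and> w!0 = 0 \<and> w!1 = 1 then {1} else {}) \<union> Suc ` {j \<in> {1..length w}. ?P w j}"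
    proof (cases j)
      case 0 then show ?thesis by auto
    next
      case (Suc i)
      show ?thesis
      proof (cases i)
        case 0 then show ?thesis using Suc by (auto simp: numeral_2_eq_2)
      next
        case (Suc i') then show ?thesis using \<open>j = Suc i\<close> by (auto simp: image_iff)
      qed
    qed
  qed
  have fin: "finite {j \<in> {1..length w}. ?P w j}" by simp
  have "1 \<notin> Suc ` {j \<in> {1..length w}. ?P w j}" by auto
  then show ?thesis unfolding occ001_def eq using fin
    by (auto simp: card_image)
qed

lemma o00_Nil: "o00 [] = 0"
  by (simp add: o00_def)

lemma o00_Cons2:
  "o00 (a#b#w) = (if a = 0 \<and> b = 0 then 1 else 0) + o00 w"
proof -
  let ?P = "\<lambda>w i. w ! (2 * i - 1 - 1) = (0::nat) \<and> w ! (2 * i - 1) = 0"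
  have eq: "{i \<in> {1..length (a#b#w) div 2}. ?P (a#b#w) i} =
     (if a = 0 \<and> b = 0 then {1} else {}) \<union> Suc ` {i \<in> {1..length w div 2}. ?P w i}"
  proof (rule set_eqI)
    fix j
    show "j \<in> {i \<in> {1..length (a#b#w) div 2}. ?P (a#b#w) i} \<longleftrightarrow> j \<in> (if a = 0 \<and> b = 0 then {1} else {}) \<union> Suc ` {i \<in> {1..length w div 2}. ?P w i}"
    proof (cases j)
      case 0 then show ?thesis by auto
    next
      case (Suc i)
      show ?thesis
      proof (cases i)
        case 0 then show ?thesis using Suc by auto
      next
        case (Suc i') 
        have a: "2 * j - 1 - 1 = Suc (Suc (2 * i - 1 - 1))" "2 * j - 1 = Suc (Suc (2*i - 1))" using \<open>j = Suc i\<close> Suc by auto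
        show ?thesis using \<open>j = Suc i\<close> Suc a by (auto simp: image_iff)
      qed
    qed
  qed
  have "1 \<notin> Suc ` {i \<in> {1..length w div 2}. ?P w i}" by auto
  then show ?thesis unfolding o00_def Let_def eq
    by (auto simp: card_image)
qed


datatype tk = TS | TE | TZ

fun occp :: "nat list \<Rightarrow> tk list \<times> nat list" where
  "occp [] = ([], [])"
| "occp [0] = ([], [0])"
| "occp [0,0] = ([], [0,0])"
| "occp (0#0#0#w) = (fst (occp (0#0#w)), 0 # snd (occp (0#0#w)))"
| "occp (0#0#Suc m#w) = (TS # fst (occp w), 1 # snd (occp w))"
| "occp (0#Suc m#w) = (TE # fst (occp w), snd (occp w))"
| "occp (Suc m#w) = (TZ # fst (occp w), snd (occp w))"

fun occi :: "tk list \<Rightarrow> nat list \<Rightarrow> nat list" where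
  "occi [] t = replicate (length t) 0"
| "occi (TZ#s) t = 1 # occi s t"
| "occi (TE#s) t = 0 # 1 # occi s t"
| "occi (TS#s) [] = []"
| "occi (TS#s) (0#t) = 0 # occi (TS#s) t"
| "occi (TS#s) (Suc m#t) = 0#0#1# occi s t"

definition cnt :: "'a \<Rightarrow> 'a list \<Rightarrow> nat" where "cnt x xs = length (filter (\<lambda>y. y = x) xs)"

lemma cnt_simps[simp]: "cnt x [] = 0" "cnt x (y#ys) = (if y = x then 1 else 0) + cnt x ys"
  by (auto simp: cnt_def)

abbreviation nz :: "nat list \<Rightarrow> nat" where "nz w \<equiv> length (filter (\<lambda>x. x \<noteq> 0) w)"
abbreviation zs :: "nat list \<Rightarrow> nat" where "zs w \<equiv> length (filter (\<lambda>x. x = 0) w)"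

lemma occp00: "fst (occp (0#0#w)) = [] \<or> hd (fst (occp (0#0#w))) = TS"
proof (induction w)
  case Nil then show ?case by simp
next
  case (Cons a w) then show ?case by (cases a) auto
qed

lemma occi0: "s = [] \<or> hd s = TS \<Longrightarrow> occi s (0#t) = 0 # occi s t"
  by (cases s) auto

lemma occ001_1: "occ001 (Suc m#w) = occ001 w"
  by (subst occ001_Cons) simp
lemma occ001_01: "occ001 (0#Suc 0#w) = occ001 w"
  by (simp only: occ001_Cons[of 0 "Suc 0#w"] occ001_1) simp
lemma occ001_001: "occ001 (0#0#Suc 0#w) = Suc (occ001 w)"
  by (simp only: occ001_Cons[of 0 "0#Suc 0#w"] occ001_01) simp
lemma occ001_000: "occ001 (0#0#0#w) = occ001 (0#0#w)"
  by (subst occ001_Cons) simp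
lemma occ001_0: "occ001 [0] = 0" "occ001 [0,0] = 0"
  by (simp_all add: occ001_def)
lemma occp_props:
  assumes "set w \<subseteq> {0,1}"
  shows "length (fst (occp w)) = nz w
    \<and> length (snd (occp w)) + cnt TS (fst (occp w)) + cnt TE (fst (occp w)) = zs w
    \<and> cnt 1 (snd (occp w)) = cnt TS (fst (occp w))
    \<and> set (snd (occp w)) \<subseteq> {0,1}
    \<and> cnt TS (fst (occp w)) = occ001 w
    \<and> occi (fst (occp w)) (snd (occp w)) = w"
  using assms
proof (induction w rule: occp.induct)
  case 1 then show ?case by (simp add: occ001_Nil)
next
  case 2 then show ?case by (simp add: occ001_0)
next
  case 3 then show ?case by (simp add: occ001_0)
next
  case (4 w)
  have "set (0#0#w) \<subseteq> {0,1}" using "4.prems" by auto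
  from 4(1)[OF this] have IH: "length (fst (occp (0#0#w))) = nz (0#0#w)
    \<and> length (snd (occp (0#0#w))) + cnt TS (fst (occp (0#0#w))) + cnt TE (fst (occp (0#0#w))) = zs (0#0#w)
    \<and> cnt 1 (snd (occp (0#0#w))) = cnt TS (fst (occp (0#0#w)))
    \<and> set (snd (occp (0#0#w))) \<subseteq> {0,1}
    \<and> cnt TS (fst (occp (0#0#w))) = occ001 (0#0#w)
    \<and> occi (fst (occp (0#0#w))) (snd (occp (0#0#w))) = 0#0#w" .
  have o: "occ001 (0#0#0#w) = occ001 (0#0#w)" by (rule occ001_000)
  show ?case using IH occp00[of w] o by (simp add: occi0)
next
  case (5 m w)
  have m: "m = 0" and sw: "set w \<subseteq> {0,1}" using "5.prems" by auto
  note IH = "5.IH"[OF sw]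
  have e: "occp (0 # 0 # Suc 0 # w) = (TS # fst (occp w), Suc 0 # snd (occp w))" by simp
  have e2: "occi (TS # s) (Suc 0 # t) = 0 # 0 # Suc 0 # occi s t" for s t by simp
  show ?case unfolding m e fst_conv snd_conv occ001_001 using IH by (simp only: cnt_simps e2 list.size filter.simps) simp
next
  case (6 m w)
  have m: "m = 0" and sw: "set w \<subseteq> {0,1}" using "6.prems" by auto
  note IH = "6.IH"[OF sw]
  have e: "occp (0 # Suc 0 # w) = (TE # fst (occp w), snd (occp w))" by simp
  have e2: "occi (TE # s) t = 0 # Suc 0 # occi s t" for s t by simp
  show ?case unfolding m e fst_conv snd_conv occ001_01 using IH by (simp only: cnt_simps e2 list.size filter.simps) simp
next
  case (7 m w)
  have m: "m = 0" and sw: "set w \<subseteq> {0,1}" using "7.prems" by auto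
  note IH = "7.IH"[OF sw]
  have e: "occp (Suc 0 # w) = (TZ # fst (occp w), snd (occp w))" by simp
  have e2: "occi (TZ # s) t = Suc 0 # occi s t" for s t by simp
  show ?case unfolding m e fst_conv snd_conv occ001_1 using IH by (simp only: cnt_simps e2 list.size filter.simps) simp
qed




lemma occp_rep: "occp (replicate m 0) = ([], replicate m 0)"
proof (induction m rule: nat_less_induct)
  case (1 m)
  show ?case
  proof (cases m)
    case 0 then show ?thesis by simp
  next
    case (Suc m1) note m1 = Suc
    show ?thesis
    proof (cases m1)
      case 0 then show ?thesis using m1 by simp
    next
      case (Suc m2) note m2 = Suc
      show ?thesis
      proof (cases m2)
        case 0 then show ?thesis using m1 m2 by (simp add: numeral_2_eq_2)
      next
        case (Suc m3)
        have "occp (replicate (Suc (Suc m3)) 0) = ([], replicate (Suc (Suc m3)) 0)"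
          using "1" m1 m2 Suc by (metis lessI)
        then show ?thesis using m1 m2 Suc by simp
      qed
    qed
  qed
qed

lemma occi_set: "set (occi s t) \<subseteq> {0,1}"
  by (induction s t rule: occi.induct) auto

lemma occi_TS: "cnt (Suc 0) t \<ge> 1 \<Longrightarrow> \<exists>r. occi (TS#s) t = 0#0#r"
proof (induction t)
  case Nil then show ?case by simp
next
  case (Cons a t) then show ?case by (cases a) (auto split: if_splits)
qed

lemma zeros_rep: "set t \<subseteq> {0,1} \<Longrightarrow> cnt (Suc 0) t = 0 \<Longrightarrow> t = replicate (length t) 0"
proof (induction t)
  case Nil then show ?case by simp
next
  case (Cons a t) then show ?case by (auto split: if_splits)
qed

lemma occp_occi:
  "set t \<subseteq> {0,1} \<Longrightarrow> cnt 1 t = cnt TS s \<Longrightarrow> occp (occi s t) = (s, t)"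
proof (induction s t rule: occi.induct)
  case (1 t)
  then have "t = replicate (length t) 0" using zeros_rep by simp
  then show ?case by (metis occi.simps(1) occp_rep)
next
  case (2 s t) then show ?case by simp
next
  case (3 s t) then show ?case by simp
next
  case (4 s) then show ?case by simp
next
  case (5 s t)
  then have IH: "occp (occi (TS#s) t) = (TS#s, t)" by simp
  have "cnt (Suc 0) t \<ge> 1" using "5.prems" by simp
  then obtain r where r: "occi (TS#s) t = 0#0#r" using occi_TS by blast
  show ?case using IH r by simp
next
  case (6 s m t)
  then have m: "m = 0" by simp
  then show ?case using 6 by simp
qed





fun pp :: "nat list \<Rightarrow> tk list \<times> nat list" where
  "pp [] = ([], [])"
| "pp [a] = ([], [])"
| "pp (a#b#w) = ((if a = 0 then (if b = 0 then TS else TE) else TZ) # fst (pp w),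
                 (if a = 0 then [] else [b]) @ snd (pp w))"

primrec pi2 :: "tk list \<Rightarrow> nat list \<Rightarrow> nat list" where
  "pi2 [] l = []"
| "pi2 (x#s) l = (case x of TS \<Rightarrow> 0#0#pi2 s l | TE \<Rightarrow> 0#1#pi2 s l
     | TZ \<Rightarrow> (case l of [] \<Rightarrow> [] | b#l' \<Rightarrow> 1#b#pi2 s l'))"

lemma pp_props:
  assumes "set w \<subseteq> {0,1}" "even (length w)"
  shows "length w = 2 * length (fst (pp w))
    \<and> cnt TS (fst (pp w)) = o00 w
    \<and> set (snd (pp w)) \<subseteq> {0,1}
    \<and> length (snd (pp w)) = cnt TZ (fst (pp w))
    \<and> zs w = 2 * cnt TS (fst (pp w)) + cnt TE (fst (pp w)) + cnt 0 (snd (pp w))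
    \<and> pi2 (fst (pp w)) (snd (pp w)) = w"
  using assms
proof (induction w rule: pp.induct)
  case (3 a b w)
  then have sw: "set w \<subseteq> {0,1}" "even (length w)" by auto
  have ab: "a \<in> {0,1}" "b \<in> {0,1}" using "3.prems" by auto
  note IH = "3.IH"[OF sw]
  have o: "o00 (a#b#w) = (if a = 0 \<and> b = 0 then 1 else 0) + o00 w" by (rule o00_Cons2)
  from ab have "(a = 0 \<and> b = 0) \<or> (a = 0 \<and> b = 1) \<or> (a = 1 \<and> b = 0) \<or> (a = 1 \<and> b = 1)" by auto
  then show ?case
  proof (elim disjE conjE)
    assume "a = 0" "b = 0" then show ?thesis using IH o by simp
  next
    assume "a = 0" "b = 1" then show ?thesis using IH o by simp
  next
    assume "a = 1" "b = 0" then show ?thesis using IH o by simp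
  next
    assume "a = 1" "b = 1" then show ?thesis using IH o by simp
  qed
next
  case 1 then show ?case by (simp add: o00_Nil)
next
  case (2 v) then show ?case by simp
qed

lemma pi2_len: "length l = cnt TZ s \<Longrightarrow> length (pi2 s l) = 2 * length s"
proof (induction s arbitrary: l)
  case Nil then show ?case by simp
next
  case (Cons x s) then show ?case by (cases x; cases l) auto
qed

lemma pi2_set: "set l \<subseteq> {0,1} \<Longrightarrow> set (pi2 s l) \<subseteq> {0,1}"
proof (induction s arbitrary: l)
  case Nil then show ?case by simp
next
  case (Cons x s) then show ?case by (cases x; cases l) auto
qed

lemma pp_pi2: "length l = cnt TZ s \<Longrightarrow> pp (pi2 s l) = (s, l)"
proof (induction s arbitrary: l)
  case Nil then show ?case by simp
next
  case (Cons x s) then show ?case by (cases x; cases l) auto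
qed

lemma cnt_tk: "cnt TS s + cnt TE s + cnt TZ s = length s"
proof (induction s)
  case Nil then show ?case by simp
next
  case (Cons a s) then show ?case by (cases a) auto
qed

lemma cnt01: "set l \<subseteq> {0,1} \<Longrightarrow> cnt 0 l + cnt (Suc 0) l = length l"
  by (induction l) auto

lemma len_split: "length w = zs w + nz w"
  using sum_length_filter_compl[of "\<lambda>x. x = 0" w] by simp




definition Cset :: "nat \<Rightarrow> nat \<Rightarrow> (tk list \<times> nat list) set" where
  "Cset n k = {(s,l). length s = n \<and> cnt TS s = k \<and> length l = cnt TZ s \<and> set l \<subseteq> {0,1} \<and> cnt 1 l = k}"

lemma occ_bij: "bij_betw occp {w \<in> G n. occ001 w = k} (Cset n k)"
proof (rule bij_betw_byWitness[where f' = "\<lambda>(s,l). occi s l"])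
  show "\<forall>w\<in>{w \<in> G n. occ001 w = k}. (\<lambda>(s,l). occi s l) (occp w) = w"
  proof
    fix w assume "w \<in> {w \<in> G n. occ001 w = k}"
    then have "set w \<subseteq> {0,1}" by (simp add: G_def)
    from occp_props[OF this] show "(\<lambda>(s,l). occi s l) (occp w) = w" by (simp add: case_prod_beta)
  qed
  show "\<forall>p\<in>Cset n k. occp ((\<lambda>(s,l). occi s l) p) = p"
    by (auto simp: Cset_def intro!: occp_occi)
  show "occp ` {w \<in> G n. occ001 w = k} \<subseteq> Cset n k"
  proof
    fix p assume "p \<in> occp ` {w \<in> G n. occ001 w = k}"
    then obtain w where w: "w \<in> G n" "occ001 w = k" and p: "p = occp w" by auto
    have sw: "set w \<subseteq> {0,1}" and lw: "length w = 2*n" and zw: "zs w = n" using w by (auto simp: G_def)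
    have nw: "nz w = n" using len_split[of w] lw zw by simp
    note P = occp_props[OF sw]
    have t: "cnt TS (fst (occp w)) + cnt TE (fst (occp w)) + cnt TZ (fst (occp w)) = length (fst (occp w))"
      by (rule cnt_tk)
    show "p \<in> Cset n k" unfolding p Cset_def using P t nw zw w(2)
      by (cases "occp w") auto
  qed
  show "(\<lambda>(s,l). occi s l) ` Cset n k \<subseteq> {w \<in> G n. occ001 w = k}"
  proof
    fix w assume "w \<in> (\<lambda>(s,l). occi s l) ` Cset n k"
    then obtain s l where sl: "(s,l) \<in> Cset n k" and w: "w = occi s l" by auto
    have c: "length s = n" "cnt TS s = k" "length l = cnt TZ s" "set l \<subseteq> {0,1}" "cnt 1 l = k"
      using sl by (auto simp: Cset_def)
    have sw: "set w \<subseteq> {0,1}" unfolding w by (rule occi_set)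
    have o: "occp w = (s,l)" unfolding w using c by (intro occp_occi) auto
    note P = occp_props[OF sw]
    have t: "cnt TS s + cnt TE s + cnt TZ s = length s" by (rule cnt_tk)
    have nw: "nz w = n" and zw: "zs w = n" and ow: "occ001 w = k" using P o c t by auto
    have lw: "length w = 2 * n" using len_split[of w] nw zw by simp
    show "w \<in> {w \<in> G n. occ001 w = k}" using sw lw zw ow by (auto simp: G_def)
  qed
qed

lemma pair_bij: "bij_betw pp {w \<in> G n. o00 w = k} (Cset n k)"
proof (rule bij_betw_byWitness[where f' = "\<lambda>(s,l). pi2 s l"])
  show "\<forall>w\<in>{w \<in> G n. o00 w = k}. (\<lambda>(s,l). pi2 s l) (pp w) = w"
  proof
    fix w assume "w \<in> {w \<in> G n. o00 w = k}"
    then have "set w \<subseteq> {0,1}" "even (length w)" by (auto simp: G_def)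
    from pp_props[OF this] show "(\<lambda>(s,l). pi2 s l) (pp w) = w" by (simp add: case_prod_beta)
  qed
  show "\<forall>p\<in>Cset n k. pp ((\<lambda>(s,l). pi2 s l) p) = p"
    by (auto simp: Cset_def intro!: pp_pi2)
  show "pp ` {w \<in> G n. o00 w = k} \<subseteq> Cset n k"
  proof
    fix p assume "p \<in> pp ` {w \<in> G n. o00 w = k}"
    then obtain w where w: "w \<in> G n" "o00 w = k" and p: "p = pp w" by auto
    have sw: "set w \<subseteq> {0,1}" and lw: "length w = 2*n" and zw: "zs w = n" using w by (auto simp: G_def)
    have ev: "even (length w)" using lw by simp
    note P = pp_props[OF sw ev]
    obtain s l where e: "pp w = (s,l)" by (cases "pp w")
    have t: "cnt TS s + cnt TE s + cnt TZ s = length s" by (rule cnt_tk)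
    have c01: "cnt 0 l + cnt (Suc 0) l = length l" using P e by (intro cnt01) simp
    show "p \<in> Cset n k" unfolding p Cset_def using P t c01 lw zw w(2) e by auto
  qed
  show "(\<lambda>(s,l). pi2 s l) ` Cset n k \<subseteq> {w \<in> G n. o00 w = k}"
  proof
    fix w assume "w \<in> (\<lambda>(s,l). pi2 s l) ` Cset n k"
    then obtain s l where sl: "(s,l) \<in> Cset n k" and w: "w = pi2 s l" by auto
    have c: "length s = n" "cnt TS s = k" "length l = cnt TZ s" "set l \<subseteq> {0,1}" "cnt 1 l = k"
      using sl by (auto simp: Cset_def)
    have sw: "set w \<subseteq> {0,1}" unfolding w using c by (intro pi2_set) auto
    have lw: "length w = 2 * n" unfolding w using c pi2_len by simp
    have o: "pp w = (s,l)" unfolding w using c by (intro pp_pi2) auto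
    note P = pp_props[OF sw] 
    have t: "cnt TS s + cnt TE s + cnt TZ s = length s" by (rule cnt_tk)
    have c01: "cnt 0 l + cnt (Suc 0) l = length l" using c by (intro cnt01) simp
    have zw: "zs w = n" and ow: "o00 w = k" using P o c t lw c01 by auto
    show "w \<in> {w \<in> G n. o00 w = k}" using sw lw zw ow by (auto simp: G_def)
  qed
qed



definition sg :: "nat \<Rightarrow> nat \<Rightarrow> nat" where
  "sg n j = (if j < 2*n then (if even j then j div 2 else 2*n - 1 - j div 2) else j)"
definition tg :: "nat \<Rightarrow> nat \<Rightarrow> nat" where
  "tg n i = (if i < n then 2*i else if i < 2*n then 2*(2*n - 1 - i) + 1 else i)"

lemma sg_lt: "j < 2*n \<Longrightarrow> sg n j < 2*n"
  unfolding sg_def by auto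
lemma tg_lt: "i < 2*n \<Longrightarrow> tg n i < 2*n"
  unfolding tg_def by auto
lemma sg_tg: "sg n (tg n i) = i"
  unfolding sg_def tg_def by auto
lemma tg_sg: "tg n (sg n j) = j"
  unfolding sg_def tg_def by auto

lemma sg_perm: "sg n permutes {..<2*n}"
proof (rule bij_imp_permutes)
  show "bij_betw (sg n) {..<2*n} {..<2*n}"
    by (rule bij_betw_byWitness[where f' = "tg n"]) (auto simp: sg_tg tg_sg sg_lt tg_lt)
  show "x \<notin> {..<2*n} \<Longrightarrow> sg n x = x" for x by (simp add: sg_def)
qed

lemma tg_perm: "tg n permutes {..<2*n}"
proof (rule bij_imp_permutes)
  show "bij_betw (tg n) {..<2*n} {..<2*n}"
    by (rule bij_betw_byWitness[where f' = "sg n"]) (auto simp: sg_tg tg_sg sg_lt tg_lt)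
  show "x \<notin> {..<2*n} \<Longrightarrow> tg n x = x" for x by (simp add: tg_def)
qed

lemma zs_mset: "zs w = size (filter_mset (\<lambda>x. x = 0) (mset w))"
  by (metis mset_filter size_mset)

lemma perm_G:
  assumes "w \<in> G n" "f permutes {..<2*n}"
  shows "permute_list f w \<in> G n"
proof -
  have l: "length w = 2*n" using assms by (simp add: G_def)
  have m: "mset (permute_list f w) = mset w" using assms(2) l by simp
  have "set (permute_list f w) = set w" by (metis m set_mset_mset)
  then show ?thesis using assms m zs_mset[of w] zs_mset[of "permute_list f w"] by (auto simp: G_def)
qed

lemma sz_o00:
  assumes "length w = 2*n"
  shows "o00 (permute_list (sg n) w) = sz w"
proof -
  have "{i \<in> {1..n}. permute_list (sg n) w ! (2 * i - 1 - 1) = 0 \<and> permute_list (sg n) w ! (2 * i - 1) = 0}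
      = {i \<in> {1..n}. w ! (i - 1) = 0 \<and> w ! (2 * n + 1 - i - 1) = 0}"
  proof (rule Collect_cong)
    fix i
    show "(i \<in> {1..n} \<and> permute_list (sg n) w ! (2 * i - 1 - 1) = 0 \<and> permute_list (sg n) w ! (2 * i - 1) = 0)
      = (i \<in> {1..n} \<and> w ! (i - 1) = 0 \<and> w ! (2 * n + 1 - i - 1) = 0)"
    proof (cases "i \<in> {1..n}")
      case True
      then have a: "2*i - 1 - 1 < length w" "2*i - 1 < length w" using assms by auto
      have b: "sg n (2*i-1-1) = i - 1" "sg n (2*i - 1) = 2*n + 1 - i - 1"
        using True unfolding sg_def by auto
      show ?thesis using a b True by (simp add: permute_list_def)
    qed auto
  qed
  then show ?thesis using assms by (simp add: o00_def sz_def Let_def)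
qed

lemma sz_bij: "bij_betw (permute_list (sg n)) {w \<in> G n. sz w = k} {w \<in> G n. o00 w = k}"
proof (rule bij_betw_byWitness[where f' = "permute_list (tg n)"])
  have inv: "permute_list g (permute_list f w) = w" if "length w = 2*n" "\<And>i. i < 2*n \<Longrightarrow> f (g i) = i"
    "\<And>i. i < 2*n \<Longrightarrow> g i < 2*n" for f g and w :: "nat list"
    by (rule nth_equalityI) (auto simp: permute_list_def that)
  show "\<forall>w\<in>{w \<in> G n. sz w = k}. permute_list (tg n) (permute_list (sg n) w) = w"
    by (auto simp: G_def intro!: inv sg_tg tg_lt)
  show "\<forall>w\<in>{w \<in> G n. o00 w = k}. permute_list (sg n) (permute_list (tg n) w) = w"
    by (auto simp: G_def intro!: inv tg_sg sg_lt)
  show "permute_list (sg n) ` {w \<in> G n. sz w = k} \<subseteq> {w \<in> G n. o00 w = k}"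
    using perm_G[OF _ sg_perm] sz_o00 by (auto simp: G_def)
  show "permute_list (tg n) ` {w \<in> G n. o00 w = k} \<subseteq> {w \<in> G n. sz w = k}"
  proof
    fix v assume "v \<in> permute_list (tg n) ` {w \<in> G n. o00 w = k}"
    then obtain w where w: "w \<in> G n" "o00 w = k" and v: "v = permute_list (tg n) w" by auto
    have lw: "length w = 2*n" using w by (simp add: G_def)
    have vG: "v \<in> G n" using perm_G[OF w(1) tg_perm] v by simp
    have "permute_list (sg n) v = w" unfolding v
      by (rule inv) (auto simp: lw tg_sg sg_lt)
    then have "sz v = k" using sz_o00[of v n] vG w(2) by (simp add: G_def)
    then show "v \<in> {w \<in> G n. sz w = k}" using vG by simp
  qed
qed

theorem theorem3p3:
  fixes n k :: nat
  shows "card {w \<in> G n. sz w = k} = card {w \<in> G n. o00 w = k}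
       \<and> card {w \<in> G n. o00 w = k} = card {w \<in> G n. occ001 w = k}"
proof
  show "card {w \<in> G n. sz w = k} = card {w \<in> G n. o00 w = k}"
    by (rule bij_betw_same_card[OF sz_bij])
  have "card {w \<in> G n. o00 w = k} = card (Cset n k)" by (rule bij_betw_same_card[OF pair_bij])
  also have "\<dots> = card {w \<in> G n. occ001 w = k}" by (rule bij_betw_same_card[OF occ_bij, symmetric])
  finally show "card {w \<in> G n. o00 w = k} = card {w \<in> G n. occ001 w = k}" .
qed


end
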